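(* Let $n\ge 2$ and let $\mathcal{F}_1,\dots,\mathcal{F}_n$ be collections of axis-parallel boxes in $\mathbb{R}^d$. Suppose there exists $j\in[d]$ such that for all $\ell\neq k$ in $[n]$, all $B\in\mathcal{F}_\ell$ and all $B'\in\mathcal{F}_k$, we have $\Pi_j(B)\cap\Pi_j(B')\neq\emptyset$. Then there exists $S\subseteq[n]$ with $|S|\ge n-1$ such that for every $i\in S$ there is a hyperplane orthogonal to the $j$-th coordinate axis (i.e., of the form $\{x\in\mathbb{R}^d: x_j=c\}$) that meets every box of $\mathcal{F}_i$.
   Context: An axis-parallel box in $\mathbb{R}^d$ is a set $B=[\alpha_1,\beta_1]\times\dots\times[\alpha_d,\beta_d]$ with real $\alpha_j\le\beta_j$; $\Pi_j(B)=[\alpha_j,\beta_j]$ denotes its projection onto the $j$-th coordinate axis. *)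

theory Defs
  imports "HOL-Analysis.Analysis"
begin

definition is_box :: "(real^'d) set \<Rightarrow> bool" where
  "is_box B \<longleftrightarrow> (\<exists>a b. (\<forall>k. a$k \<le> b$k) \<and> B = cbox a b)"

definition proj :: "'d \<Rightarrow> (real^'d) set \<Rightarrow> real set" where
  "proj j B = (\<lambda>x. x$j) ` B"

end

theory Submission
  imports Defs
begin

lemma box_proj:
  assumes "is_box (B :: (real^'d) set)"
  shows "proj j B = {Inf (proj j B)..Sup (proj j B)} \<and> Inf (proj j B) \<le> Sup (proj j B)"
proof -
  obtain a b where ab: "\<forall>k. a$k \<le> b$k" "B = cbox a b" using assms unfolding is_box_def by blast
  have "proj j B = {a$j..b$j}"
  proof
    show "proj j B \<subseteq> {a$j..b$j}" unfolding proj_def ab(2) by (auto simp: mem_box_cart)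
    show "{a$j..b$j} \<subseteq> proj j B"
    proof
      fix c assume c: "c \<in> {a$j..b$j}"
      define x where "x = (\<chi> k. if k = j then c else a$k)"
      have "x \<in> B" using c ab unfolding x_def by (auto simp: mem_box_cart)
      moreover have "x$j = c" unfolding x_def by simp
      ultimately show "c \<in> proj j B" unfolding proj_def by force
    qed
  qed
  then show ?thesis using ab(1)[rule_format, of j] by simp
qed

lemma good_or_bad:
  assumes "\<And>B. B \<in> G \<Longrightarrow> is_box (B :: (real^'d) set)"
    and "\<not> (\<exists>c. \<forall>B \<in> G. c \<in> proj j B)"
  shows "\<exists>B1\<in>G. \<exists>B2\<in>G. Sup (proj j B2) < Inf (proj j B1)"
proof (rule ccontr)
  assume nb: "\<not> ?thesis"
  let ?l = "\<lambda>B. Inf (proj j B)" and ?h = "\<lambda>B. Sup (proj j B)"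
  have le: "?l B1 \<le> ?h B2" if "B1 \<in> G" "B2 \<in> G" for B1 B2 using nb that by force
  show False
  proof (cases "G = {}")
    case True then show ?thesis using assms(2) by blast
  next
    case False
    then obtain B0 where B0: "B0 \<in> G" by blast
    define c where "c = Sup (?l ` G)"
    have bdd: "bdd_above (?l ` G)" using le B0 by (intro bdd_aboveI[of _ "?h B0"]) auto
    have "c \<in> proj j B" if "B \<in> G" for B
    proof -
      have "?l B \<le> c" unfolding c_def using bdd that by (intro cSup_upper) auto
      moreover have "c \<le> ?h B" unfolding c_def using False le that by (intro cSup_least) auto
      ultimately show ?thesis using box_proj[OF assms(1)[OF that], of j] by auto
    qed
    then show False using assms(2) by blast
  qed
qed

theorem lemma2:
  fixes n :: nat and F :: "nat \<Rightarrow> (real^'d) set set" and j :: 'd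
  assumes "n \<ge> 2"
    and "\<And>i B. i \<in> {1..n} \<Longrightarrow> B \<in> F i \<Longrightarrow> is_box B"
    and "\<And>l k B B'. l \<in> {1..n} \<Longrightarrow> k \<in> {1..n} \<Longrightarrow> l \<noteq> k \<Longrightarrow>
           B \<in> F l \<Longrightarrow> B' \<in> F k \<Longrightarrow> proj j B \<inter> proj j B' \<noteq> {}"
  shows "\<exists>S \<subseteq> {1..n}. card S \<ge> n - 1 \<and>
           (\<forall>i \<in> S. \<exists>c::real. \<forall>B \<in> F i. B \<inter> {x. x$j = c} \<noteq> {})"
proof -
  define good where "good i = (\<exists>c. \<forall>B \<in> F i. c \<in> proj j B)" for i
  have goodE: "\<exists>c::real. \<forall>B \<in> F i. B \<inter> {x. x$j = c} \<noteq> {}" if "good i" for i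
    using that unfolding good_def proj_def by fastforce
  let ?l = "\<lambda>B. Inf (proj j B)" and ?h = "\<lambda>B. Sup (proj j B)"
  have cross: "?l B \<le> ?h B'" if h: "l \<in> {1..n}" "k \<in> {1..n}" "l \<noteq> k" "B \<in> F l" "B' \<in> F k" for l k B B'
  proof -
    obtain x where "x \<in> proj j B" "x \<in> proj j B'" using assms(3)[OF h] by blast
    moreover have e1: "proj j B = {?l B..?h B}" using box_proj[OF assms(2)[OF h(1,4)], of j] by blast
    moreover have e2: "proj j B' = {?l B'..?h B'}" using box_proj[OF assms(2)[OF h(2,5)], of j] by blast
    ultimately have "x \<in> {?l B..?h B}" "x \<in> {?l B'..?h B'}" by simp_all
    then show ?thesis by auto
  qed
  have uniq: "i = k" if t: "i \<in> {1..n}" "k \<in> {1..n}" "\<not> good i" "\<not> good k" for i k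
  proof (rule ccontr)
    assume ne: "i \<noteq> k"
    obtain B1 B2 where B: "B1 \<in> F i" "B2 \<in> F i" "?h B2 < ?l B1"
      using good_or_bad[of "F i" j] assms(2)[OF t(1)] t(3) unfolding good_def by blast
    obtain C1 C2 where C: "C1 \<in> F k" "C2 \<in> F k" "?h C2 < ?l C1"
      using good_or_bad[of "F k" j] assms(2)[OF t(2)] t(4) unfolding good_def by blast
    have "?l B1 \<le> ?h C2" using cross[OF t(1,2) ne B(1) C(2)] .
    moreover have "?l C1 \<le> ?h B2" using cross[OF t(2,1) ne[symmetric] C(1) B(2)] .
    ultimately show False using B(3) C(3) by linarith
  qed
  define S where "S = {i \<in> {1..n}. good i}"
  have "card S \<ge> n - 1"
  proof (cases "\<exists>i0 \<in> {1..n}. \<not> good i0")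
    case True
    then obtain i0 where i0: "i0 \<in> {1..n}" "\<not> good i0" by blast
    have "{1..n} - {i0} \<subseteq> S" unfolding S_def using uniq i0 by blast
    then have "card ({1..n} - {i0}) \<le> card S" by (intro card_mono) (auto simp: S_def)
    then show ?thesis using i0 by simp
  next
    case False
    then have "S = {1..n}" unfolding S_def by blast
    then show ?thesis by simp
  qed
  then show ?thesis using goodE by (intro exI[of _ S]) (auto simp: S_def)
qed

end
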